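(* Let $T\subset V$ be an open cone with basepoint $b\in T$, let $x\in\partial T\setminus[0]_T$, and let $h\in\mathcal K_{\tau(T,x)}\cup\mathcal B_{\tau(T,x)}$. Then there is a sequence of points in $T$ that is an almost-geodesic with respect to both $F_T$ and $RF_T$, and that converges to $h|_T$ in the Funk sense (for $F_T$) and to $r_{T,x}$ in the reverse Funk sense (for $RF_T$).
   Context: $V$ is a finite-dimensional real vector space. An open cone is a nonempty open convex set $T\subset V$ with $\lambda T\subseteq T$ for all $\lambda>0$ and $0\notin T$; $\partial T$ its boundary. Write $x\le_T y$ iff $y-x\in\overline T$, $[0]_T:=\overline T\cap(-\overline T)$. $M_T(y/x):=\inf\{\lambda>0:y\le_T\lambda x\}$, $F_T(y,x):=\log M_T(y/x)$, $RF_T(x,y):=F_T(y,x)$. Open tangent cone $\tau(T,x):=\{\lambda(y-x):\lambda>0,\ y\in T\}$ (an open cone containing $T$). For an open cone $S\ni b$: $f_{S,p}(y):=F_S(y,p)-F_S(b,p)$ ($p\in S$), $\mathcal K_S:=\{f_{S,p}:p\in S\}$; a sequence $(x_n)$ in $S$ converges in the Funk sense to $g$ if $F_S(\cdot,x_n)-F_S(b,x_n)\to g$ pointwise on $S$; an almost-geodesic for $d\in\{F_S,RF_S\}$ is a sequence $(x_l)$ in $S$ with, for some $\epsilon>0$, $\sum_{i=1}^l d(x_{i-1},x_i)\le d(x_0,x_l)+\epsilon$ for all $l\ge1$; $\mathcal B_S$ is the set of Funk-sense limits of $F_S$-almost-geodesics that are not in $\mathcal K_S$. For $p\in\partial T\setminus[0]_T$,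 $r_{T,p}(y):=RF_T(y,p)-RF_T(b,p)$; convergence in the reverse Funk sense means $RF_T(\cdot,x_n)-RF_T(b,x_n)\to g$ pointwise on $T$. *)

theory Defs
  imports "HOL-Analysis.Analysis"
begin

text \<open>V is modelled as a euclidean_space type (finite-dimensional real vector space).\<close>

definition open_cone :: "'a::euclidean_space set \<Rightarrow> bool" where
  "open_cone T \<longleftrightarrow> T \<noteq> {} \<and> open T \<and> convex T \<and>
     (\<forall>c>0. (\<lambda>v. c *\<^sub>R v) ` T \<subseteq> T) \<and> 0 \<notin> T"

definition cone_le :: "'a::euclidean_space set \<Rightarrow> 'a \<Rightarrow> 'a \<Rightarrow> bool" where
  "cone_le T x y \<longleftrightarrow> y - x \<in> closure T"

definition zero_set :: "'a::euclidean_space set \<Rightarrow> 'a set" where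
  "zero_set T = closure T \<inter> uminus ` closure T"

definition funkM :: "'a::euclidean_space set \<Rightarrow> 'a \<Rightarrow> 'a \<Rightarrow> real" where
  "funkM T y x = Inf {c. c > 0 \<and> cone_le T y (c *\<^sub>R x)}"

definition funk :: "'a::euclidean_space set \<Rightarrow> 'a \<Rightarrow> 'a \<Rightarrow> real" where
  "funk T y x = ln (funkM T y x)"

definition rfunk :: "'a::euclidean_space set \<Rightarrow> 'a \<Rightarrow> 'a \<Rightarrow> real" where
  "rfunk T x y = funk T y x"

definition tangent_cone :: "'a::euclidean_space set \<Rightarrow> 'a \<Rightarrow> 'a set" where
  "tangent_cone T x = {c *\<^sub>R (y - x) | c y. c > 0 \<and> y \<in> T}"

definition almost_geodesic :: "'a set \<Rightarrow> ('a \<Rightarrow> 'a \<Rightarrow> real) \<Rightarrow> (nat \<Rightarrow> 'a) \<Rightarrow> bool" where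
  "almost_geodesic S d xs \<longleftrightarrow> (\<forall>n. xs n \<in> S) \<and>
     (\<exists>\<epsilon>>0. \<forall>l\<ge>1. (\<Sum>i=1..l. d (xs (i - 1)) (xs i)) \<le> d (xs 0) (xs l) + \<epsilon>)"

definition funk_converges :: "'a::euclidean_space set \<Rightarrow> 'a \<Rightarrow> (nat \<Rightarrow> 'a) \<Rightarrow> ('a \<Rightarrow> real) \<Rightarrow> bool" where
  "funk_converges S b xs g \<longleftrightarrow> (\<forall>n. xs n \<in> S) \<and>
     (\<forall>y\<in>S. (\<lambda>n. funk S y (xs n) - funk S b (xs n)) \<longlonglongrightarrow> g y)"

definition rfunk_converges :: "'a::euclidean_space set \<Rightarrow> 'a \<Rightarrow> (nat \<Rightarrow> 'a) \<Rightarrow> ('a \<Rightarrow> real) \<Rightarrow> bool" where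
  "rfunk_converges T b xs g \<longleftrightarrow> (\<forall>n. xs n \<in> T) \<and>
     (\<forall>y\<in>T. (\<lambda>n. rfunk T y (xs n) - rfunk T b (xs n)) \<longlonglongrightarrow> g y)"

definition funk_f :: "'a::euclidean_space set \<Rightarrow> 'a \<Rightarrow> 'a \<Rightarrow> 'a \<Rightarrow> real" where
  "funk_f S b p y = funk S y p - funk S b p"

text \<open>Membership in K_S and B_S; functions on S are identified when they agree on S.\<close>
definition in_K :: "'a::euclidean_space set \<Rightarrow> 'a \<Rightarrow> ('a \<Rightarrow> real) \<Rightarrow> bool" where
  "in_K S b g \<longleftrightarrow> (\<exists>p\<in>S. \<forall>y\<in>S. g y = funk_f S b p y)"

definition in_B :: "'a::euclidean_space set \<Rightarrow> 'a \<Rightarrow> ('a \<Rightarrow> real) \<Rightarrow> bool" where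
  "in_B S b g \<longleftrightarrow> (\<exists>xs. almost_geodesic S (funk S) xs \<and> funk_converges S b xs g) \<and> \<not> in_K S b g"

definition rfunk_r :: "'a::euclidean_space set \<Rightarrow> 'a \<Rightarrow> 'a \<Rightarrow> 'a \<Rightarrow> real" where
  "rfunk_r T b p y = rfunk T y p - rfunk T b p"

end

theory Submission
  imports Defs "HOL-Analysis.Analysis"
begin


lemma ev0: "(b::real) > 0 \<Longrightarrow> (\<And>s. 0 < s \<Longrightarrow> s < b \<Longrightarrow> P s) \<Longrightarrow> eventually P (at_right 0)"
  using eventually_at_right_real[of 0 b] by (auto elim!: eventually_mono)

lemma oc_open: "open_cone S \<Longrightarrow> open S" by (simp add: open_cone_def)
lemma oc_convex: "open_cone S \<Longrightarrow> convex S" by (simp add: open_cone_def)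
lemma oc_0: "open_cone S \<Longrightarrow> 0 \<notin> S" by (simp add: open_cone_def)
lemma oc_scale: "open_cone S \<Longrightarrow> y \<in> S \<Longrightarrow> c > 0 \<Longrightarrow> c *\<^sub>R y \<in> S"
  unfolding open_cone_def by blast

lemma oc_add: assumes "open_cone S" "y \<in> S" "z \<in> S" shows "y + z \<in> S"
proof -
  have "(1/2) *\<^sub>R y + (1/2) *\<^sub>R z \<in> S"
    using oc_convex[OF assms(1)] assms(2,3) by (intro convexD) auto
  from oc_scale[OF assms(1) this, of 2] show ?thesis by (simp add: scaleR_add_right)
qed

lemma oc_0_cl: assumes "open_cone S" shows "0 \<in> closure S"
proof -
  obtain t where t: "t \<in> S" using assms unfolding open_cone_def by blast
  show ?thesis unfolding closure_approachable
  proof (intro allI impI)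
    fix e :: real assume e: "e > 0"
    define k where "k = e / (norm t + 1)"
    have k: "k > 0" using e by (simp add: k_def divide_pos_pos add_nonneg_pos)
    have "k * norm t < e"
    proof -
      have "k * norm t < k * (norm t + 1)" using k by simp
      also have "\<dots> = e" unfolding k_def using norm_ge_zero[of t] by (simp add: add_nonneg_eq_0_iff)
      finally show ?thesis .
    qed
    then show "\<exists>x\<in>S. dist x 0 < e" using oc_scale[OF assms t k] k by (intro bexI[of _ "k *\<^sub>R t"]) auto
  qed
qed

lemma oc_cl_scale: assumes "open_cone S" "y \<in> closure S" "c \<ge> 0" shows "c *\<^sub>R y \<in> closure S"
proof (cases "c = 0")
  case True then show ?thesis using oc_0_cl[OF assms(1)] by simp
next
  case False
  have "c *\<^sub>R y \<in> (*\<^sub>R) c ` closure S" using assms(2) by blast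
  also have "\<dots> = closure ((*\<^sub>R) c ` S)" by (rule closure_scaleR)
  also have "\<dots> \<subseteq> closure S"
    using assms(1) False assms(3) unfolding open_cone_def by (intro closure_mono) auto
  finally show ?thesis .
qed

lemma oc_cl_add: assumes "open_cone S" "y \<in> closure S" "z \<in> closure S" shows "y + z \<in> closure S"
proof -
  have "(1/2) *\<^sub>R y + (1/2) *\<^sub>R z \<in> closure S"
    using convex_closure[OF oc_convex[OF assms(1)]] assms(2,3) by (intro convexD) auto
  from oc_cl_scale[OF assms(1) this, of 2] show ?thesis by (simp add: scaleR_add_right)
qed

lemma oc_add_cl: assumes "open_cone S" "y \<in> S" "z \<in> closure S" shows "y + z \<in> S"
proof -
  obtain r where r: "r > 0" "ball y r \<subseteq> S" using oc_open[OF assms(1)] assms(2) open_contains_ball by blast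
  obtain z' where z': "z' \<in> S" "dist z' z < r" using assms(3) r(1) unfolding closure_approachable by blast
  have "y + (z - z') \<in> ball y r" using z'(2) by (simp add: dist_norm norm_minus_commute)
  then have "y + (z - z') \<in> S" using r by blast
  from oc_add[OF assms(1) this z'(1)] show ?thesis by simp
qed

lemma oc_neg: assumes "open_cone S" "y \<in> S" shows "- y \<notin> closure S"
  using oc_add_cl[OF assms, of "-y"] oc_0[OF assms(1)] by auto

definition Ms :: "'a::euclidean_space set \<Rightarrow> 'a \<Rightarrow> 'a \<Rightarrow> real set" where
  "Ms S y u = {c. c > 0 \<and> c *\<^sub>R u - y \<in> closure S}"

lemma funkM_Ms: "funkM S y u = Inf (Ms S y u)"
  unfolding funkM_def Ms_def cone_le_def by simp

lemma Ms_ne: assumes "open_cone S" "u \<in> S" shows "\<exists>c>0. c *\<^sub>R u - y \<in> S"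
proof -
  obtain r where r: "r > 0" "ball u r \<subseteq> S" using oc_open[OF assms(1)] assms(2) open_contains_ball by blast
  define c where "c = (norm y + 1) / r"
  have c: "c > 0" using r by (simp add: c_def divide_pos_pos add_nonneg_pos)
  have "norm y < c * r" using r unfolding c_def by simp
  then have "norm ((1/c) *\<^sub>R y) < r" using c by (simp add: field_simps)
  then have "u - (1/c) *\<^sub>R y \<in> S" using r by (auto simp: dist_norm)
  from oc_scale[OF assms(1) this c] c show ?thesis
    by (intro exI[of _ c]) (simp add: scaleR_diff_right)
qed

lemma Ms_nonempty: "open_cone S \<Longrightarrow> u \<in> S \<Longrightarrow> Ms S y u \<noteq> {}"
  using Ms_ne[of S u y] closure_subset unfolding Ms_def by blast

lemma Ms_bdd: "bdd_below (Ms S y u)"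
  unfolding Ms_def by (intro bdd_belowI[of _ 0]) auto

lemma Ms_up: assumes "open_cone S" "u \<in> S" "c \<in> Ms S y u" "c \<le> c'" shows "c' \<in> Ms S y u"
proof (cases "c' = c")
  case False
  then have "(c' - c) *\<^sub>R u \<in> S" using assms by (intro oc_scale) auto
  from oc_add_cl[OF assms(1) this, of "c *\<^sub>R u - y"] assms(3) False assms(4)
  show ?thesis unfolding Ms_def using closure_subset
    by (auto simp: algebra_simps)
qed (use assms in auto)

lemma M_le: "c \<in> Ms S y u \<Longrightarrow> funkM S y u \<le> c"
  unfolding funkM_Ms by (rule cInf_lower[OF _ Ms_bdd])

lemma M_geI: assumes "open_cone S" "u \<in> S" "\<And>c. c \<in> Ms S y u \<Longrightarrow> a \<le> c" shows "a \<le> funkM S y u"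
  unfolding funkM_Ms using Ms_nonempty[OF assms(1,2)] assms(3) by (rule cInf_greatest)

lemma M_ge0: "open_cone S \<Longrightarrow> u \<in> S \<Longrightarrow> 0 \<le> funkM S y u"
  by (rule M_geI) (auto simp: Ms_def)

lemma M_lt: assumes "open_cone S" "u \<in> S" "funkM S y u < c" shows "c \<in> Ms S y u"
proof -
  obtain c' where "c' \<in> Ms S y u" "c' < c"
    using assms(3) unfolding funkM_Ms cInf_less_iff[OF Ms_nonempty[OF assms(1,2)] Ms_bdd] by blast
  then show ?thesis using Ms_up[OF assms(1,2)] by auto
qed

lemma M_leI: assumes "open_cone S" "u \<in> S" "\<And>c. c > a \<Longrightarrow> c \<in> Ms S y u" shows "funkM S y u \<le> a"
proof (rule ccontr)
  assume "\<not> ?thesis"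
  then have "(funkM S y u + a) / 2 \<in> Ms S y u" by (intro assms(3)) auto
  from M_le[OF this] \<open>\<not> ?thesis\<close> show False by auto
qed



lemma M_pos: assumes S: "open_cone S" and u: "u \<in> S" and y: "- y \<notin> closure S" shows "funkM S y u > 0"
proof -
  have "open (- closure S)" by auto
  then obtain r where r0: "r > 0" "ball (-y) r \<subseteq> - closure S"
    using open_contains_ball[of "- closure S"] y by auto
  then have r: "r > 0" "ball (-y) r \<inter> closure S = {}" by auto
  have un: "norm u > 0" using oc_0[OF S] u by auto
  have "r / norm u \<le> funkM S y u"
  proof (rule M_geI[OF S u])
    fix c assume c: "c \<in> Ms S y u"
    then have "c *\<^sub>R u - y \<notin> ball (-y) r" using r unfolding Ms_def by auto
    then have "r \<le> norm (c *\<^sub>R u)" by (simp add: dist_norm)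
    then have "r \<le> c * norm u" using c unfolding Ms_def by simp
    then show "r / norm u \<le> c" using un by (simp add: divide_le_eq)
  qed
  moreover have "r / norm u > 0" using r un by simp
  ultimately show ?thesis by linarith
qed

lemma M_pos_in: "open_cone S \<Longrightarrow> u \<in> S \<Longrightarrow> y \<in> S \<Longrightarrow> funkM S y u > 0"
  by (rule M_pos) (auto dest: oc_neg)

lemma M_norm: assumes S: "open_cone S" and u: "u \<in> S" and r: "r > 0" "ball u r \<subseteq> S"
  shows "funkM S v u \<le> norm v / r"
proof (rule M_leI[OF S u])
  fix c assume c: "c > norm v / r"
  then have c0: "c > 0" using r by (smt (verit) divide_nonneg_pos norm_ge_zero)
  have "norm v < c * r" using c r by (simp add: divide_less_eq)
  then have "norm ((1/c) *\<^sub>R v) < r" using c0 by (simp add: field_simps)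
  then have "u - (1/c) *\<^sub>R v \<in> S" using r by (auto simp: dist_norm)
  from oc_scale[OF S this c0] have "c *\<^sub>R u - v \<in> S" using c0 by (simp add: scaleR_diff_right)
  then show "c \<in> Ms S v u" using c0 closure_subset unfolding Ms_def by auto
qed

lemma M_subadd: assumes S: "open_cone S" and u: "u \<in> S"
  shows "funkM S (y + v) u \<le> funkM S y u + funkM S v u"
proof (rule M_leI[OF S u])
  fix c assume c: "c > funkM S y u + funkM S v u"
  define e where "e = (c - funkM S y u - funkM S v u) / 2"
  have e: "e > 0" using c by (simp add: e_def)
  have 1: "funkM S y u + e \<in> Ms S y u" using e by (intro M_lt[OF S u]) auto
  have 2: "funkM S v u + e \<in> Ms S v u" using e by (intro M_lt[OF S u]) auto
  have ce: "c = (funkM S y u + e) + (funkM S v u + e)" by (simp add: e_def)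
  have "((funkM S y u + e) *\<^sub>R u - y) + ((funkM S v u + e) *\<^sub>R u - v) \<in> closure S"
    using 1 2 unfolding Ms_def by (intro oc_cl_add[OF S]) auto
  moreover have "((funkM S y u + e) *\<^sub>R u - y) + ((funkM S v u + e) *\<^sub>R u - v) = c *\<^sub>R u - (y + v)"
  proof -
    have "c *\<^sub>R u = (funkM S y u + e) *\<^sub>R u + (funkM S v u + e) *\<^sub>R u" using ce by (metis scaleR_add_left)
    then show ?thesis by (simp add: algebra_simps)
  qed
  moreover have "c > 0" using M_ge0[OF S u, of y] M_ge0[OF S u, of v] c by linarith
  ultimately show "c \<in> Ms S (y + v) u" unfolding Ms_def by auto
qed

lemma M_lip: assumes S: "open_cone S" and u: "u \<in> S"
  shows "\<exists>r>0. \<forall>y y'. \<bar>funkM S y' u - funkM S y u\<bar> \<le> norm (y' - y) / r"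
proof -
  obtain r where r: "r > 0" "ball u r \<subseteq> S" using oc_open[OF S] u open_contains_ball by blast
  have "\<bar>funkM S y' u - funkM S y u\<bar> \<le> norm (y' - y) / r" for y y'
  proof -
    have "funkM S y' u \<le> funkM S y u + funkM S (y' - y) u"
      using M_subadd[OF S u, of y "y' - y"] by simp
    moreover have "funkM S y u \<le> funkM S y' u + funkM S (y - y') u"
      using M_subadd[OF S u, of y' "y - y'"] by simp
    moreover have "funkM S (y' - y) u \<le> norm (y' - y) / r" by (rule M_norm[OF S u r])
    moreover have "funkM S (y - y') u \<le> norm (y' - y) / r"
      using M_norm[OF S u r, of "y - y'"] by (simp add: norm_minus_commute)
    ultimately show ?thesis by linarith
  qed
  then show ?thesis using r by blast
qed

lemma M_mono: assumes S: "open_cone S" and u: "u \<in> S" and a: "a > 0"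
  and le: "a *\<^sub>R d - y \<in> closure S"
  shows "funkM S y u \<le> a * funkM S d u"
proof (rule M_leI[OF S u])
  fix c assume c: "c > a * funkM S d u"
  then have "c / a > funkM S d u" using a by (simp add: field_simps)
  from M_lt[OF S u this] have "c / a > 0" "(c / a) *\<^sub>R u - d \<in> closure S" unfolding Ms_def by auto
  then have "a *\<^sub>R ((c / a) *\<^sub>R u - d) + (a *\<^sub>R d - y) \<in> closure S" "c > 0"
    using a le by (auto intro!: oc_cl_add[OF S] oc_cl_scale[OF S] simp: zero_less_divide_iff)
  moreover have "a *\<^sub>R ((c / a) *\<^sub>R u - d) + (a *\<^sub>R d - y) = c *\<^sub>R u - y"
    using a by (simp add: algebra_simps)
  ultimately show "c \<in> Ms S y u" unfolding Ms_def by auto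
qed

lemma M_self: assumes S: "open_cone S" and y: "y \<in> S" shows "funkM S y y = 1"
proof (rule antisym)
  show "funkM S y y \<le> 1"
  proof (rule M_leI[OF S y])
    fix c :: real assume "c > 1"
    then have "(c - 1) *\<^sub>R y \<in> S" by (intro oc_scale[OF S y]) auto
    then show "c \<in> Ms S y y" using \<open>c > 1\<close> closure_subset unfolding Ms_def by (auto simp: algebra_simps)
  qed
  show "1 \<le> funkM S y y"
  proof (rule M_geI[OF S y])
    fix c assume c: "c \<in> Ms S y y"
    show "1 \<le> c"
    proof (rule ccontr)
      assume "\<not> 1 \<le> c"
      then have "(1 / (1 - c)) *\<^sub>R (c *\<^sub>R y - y) \<in> closure S" using c unfolding Ms_def
        by (intro oc_cl_scale[OF S]) auto
      moreover have "(1 / (1 - c)) *\<^sub>R (c *\<^sub>R y - y) = - y"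
      proof -
        have "c *\<^sub>R y - y = (c - 1) *\<^sub>R y" by (simp add: algebra_simps)
        moreover have "(1/(1-c)) * (c - 1) = -1" using \<open>\<not> 1 \<le> c\<close> by (simp add: field_simps)
        ultimately show ?thesis by simp
      qed
      ultimately show False using oc_neg[OF S y] by simp
    qed
  qed
qed



locale tc =
  fixes T :: "'a::euclidean_space set" and x :: 'a
  assumes T: "open_cone T" and xf: "x \<in> frontier T" and xz: "x \<notin> zero_set T"
begin

abbreviation "tau \<equiv> tangent_cone T x"

lemma xcl: "x \<in> closure T" using xf by (simp add: frontier_def)
lemma xT: "x \<notin> T" using xf oc_open[OF T] by (simp add: frontier_def interior_open)
lemma xneg: "- x \<notin> closure T" using xz xcl unfolding zero_set_def by (auto simp: image_iff intro: bexI[of _ "-x"])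

lemma seg: assumes "t \<in> T" "0 < th" "th \<le> 1" shows "(1 - th) *\<^sub>R x + th *\<^sub>R t \<in> T"
proof -
  have "th *\<^sub>R t + (1 - th) *\<^sub>R x \<in> T"
    using assms by (intro oc_add_cl[OF T] oc_scale[OF T] oc_cl_scale[OF T] xcl) auto
  then show ?thesis by (simp add: add.commute)
qed

lemma tau_mem: "w \<in> tau \<longleftrightarrow> (\<exists>c y. c > 0 \<and> y \<in> T \<and> w = c *\<^sub>R (y - x))"
  unfolding tangent_cone_def by auto

lemma tau_open: "open tau"
  unfolding open_contains_ball
proof
  fix w assume "w \<in> tau"
  then obtain c y where cy: "c > 0" "y \<in> T" "w = c *\<^sub>R (y - x)" by (auto simp: tau_mem)
  obtain r where r: "r > 0" "ball y r \<subseteq> T" using oc_open[OF T] cy(2) open_contains_ball by blast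
  have "ball w (c * r) \<subseteq> tau"
  proof
    fix w' assume "w' \<in> ball w (c * r)"
    then have "norm (w' - w) < c * r" by (simp add: dist_norm norm_minus_commute)
    moreover have "norm ((1/c) *\<^sub>R (w' - w)) = norm (w' - w) / c" using cy(1) by simp
    ultimately have "norm ((1/c) *\<^sub>R (w' - w)) < r" using cy(1) by (simp add: divide_less_eq mult.commute)
    then have "y + (1/c) *\<^sub>R (w' - w) \<in> T" using r by (auto simp: dist_norm)
    moreover have "w' = c *\<^sub>R ((y + (1/c) *\<^sub>R (w' - w)) - x)" using cy by (simp add: algebra_simps)
    ultimately show "w' \<in> tau" using cy(1) by (auto simp: tau_mem)
  qed
  then show "\<exists>e>0. ball w e \<subseteq> tau" using r cy by (intro exI[of _ "c*r"]) auto
qed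

lemma tau_convex: "convex tau"
  unfolding convex_def
proof (intro ballI allI impI)
  fix w1 w2 and u v :: real assume w: "w1 \<in> tau" "w2 \<in> tau" and uv: "0 \<le> u" "0 \<le> v" "u + v = 1"
  obtain c1 y1 where 1: "c1 > 0" "y1 \<in> T" "w1 = c1 *\<^sub>R (y1 - x)" using w(1) by (auto simp: tau_mem)
  obtain c2 y2 where 2: "c2 > 0" "y2 \<in> T" "w2 = c2 *\<^sub>R (y2 - x)" using w(2) by (auto simp: tau_mem)
  define C where "C = u * c1 + v * c2"
  have C: "C > 0"
  proof (cases "u = 0")
    case True then show ?thesis using uv 2 by (simp add: C_def)
  next
    case False then show ?thesis using uv 1 2 by (simp add: C_def add_pos_nonneg)
  qed
  have p: "(u * c1 / C) *\<^sub>R y1 + (v * c2 / C) *\<^sub>R y2 \<in> T"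
    using oc_convex[OF T] 1 2 uv C by (intro convexD) (auto simp: C_def add_divide_distrib[symmetric])
  have a: "C *\<^sub>R ((u * c1/C) *\<^sub>R y1 + (v * c2/C) *\<^sub>R y2) = (u * c1) *\<^sub>R y1 + (v * c2) *\<^sub>R y2"
    using C by (simp add: scaleR_add_right)
  have b: "u *\<^sub>R w1 + v *\<^sub>R w2 = (u * c1) *\<^sub>R y1 + (v * c2) *\<^sub>R y2 - C *\<^sub>R x"
    unfolding 1(3) 2(3) C_def by (simp add: algebra_simps)
  have "u *\<^sub>R w1 + v *\<^sub>R w2 = C *\<^sub>R (((u * c1 / C) *\<^sub>R y1 + (v * c2 / C) *\<^sub>R y2) - x)"
    unfolding b scaleR_diff_right a ..
  then show "u *\<^sub>R w1 + v *\<^sub>R w2 \<in> tau" using p C by (auto simp: tau_mem)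
qed

lemma T_sub: "T \<subseteq> tau"
proof
  fix y assume y: "y \<in> T"
  have "y + x \<in> T" by (rule oc_add_cl[OF T y xcl])
  then show "y \<in> tau" unfolding tau_mem by (intro exI[of _ 1] exI[of _ "y + x"]) auto
qed

lemma tau_oc: "open_cone tau"
  unfolding open_cone_def
proof (intro conjI)
  show "tau \<noteq> {}" using T_sub T unfolding open_cone_def by blast
  show "open tau" by (rule tau_open)
  show "convex tau" by (rule tau_convex)
  show "\<forall>c>0. (*\<^sub>R) c ` tau \<subseteq> tau"
    by (auto simp: tau_mem) (metis mult_pos_pos scaleR_scaleR)
  show "0 \<notin> tau" using xT by (auto simp: tau_mem)
qed

lemma clT_sub: "closure T \<subseteq> closure tau" using T_sub by (rule closure_mono)

lemma posx: "x \<in> closure tau" using xcl clT_sub by blast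

lemma negx: "- x \<in> closure tau"
  unfolding closure_approachable
proof (intro allI impI)
  fix e :: real assume e: "e > 0"
  obtain t where t: "t \<in> T" using T unfolding open_cone_def by blast
  define k where "k = e / (norm t + 1)"
  have k: "k > 0" using e by (simp add: k_def divide_pos_pos add_nonneg_pos)
  have "k * norm t < e"
  proof -
    have "k * norm t < k * (norm t + 1)" using k by simp
    also have "\<dots> = e" unfolding k_def using norm_ge_zero[of t] by (simp add: add_nonneg_eq_0_iff)
    finally show ?thesis .
  qed
  moreover have "k *\<^sub>R t - x \<in> tau" using oc_scale[OF T t k] unfolding tau_mem
    by (intro exI[of _ 1] exI[of _ "k *\<^sub>R t"]) auto
  ultimately show "\<exists>w\<in>tau. dist w (- x) < e" using k by (intro bexI[of _ "k *\<^sub>R t - x"]) (auto simp: dist_norm)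
qed

lemma lin: assumes "a \<in> closure tau" shows "a + al *\<^sub>R x \<in> closure tau"
proof (cases "al \<ge> 0")
  case True
  then show ?thesis using assms by (intro oc_cl_add[OF tau_oc] oc_cl_scale[OF tau_oc] posx) auto
next
  case False
  then have "a + (- al) *\<^sub>R (- x) \<in> closure tau"
    using assms by (intro oc_cl_add[OF tau_oc] oc_cl_scale[OF tau_oc] negx) auto
  then show ?thesis by simp
qed

lemma tau_rep: assumes "z \<in> tau" shows "\<exists>m>0. \<forall>s. 0 < s \<and> s * m \<le> 1 \<longrightarrow> x + s *\<^sub>R z \<in> T"
proof -
  obtain c t where ct: "c > 0" "t \<in> T" "z = c *\<^sub>R (t - x)" using assms by (auto simp: tau_mem)
  have "x + s *\<^sub>R z \<in> T" if "0 < s" "s * c \<le> 1" for s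
  proof -
    have "(1 - s * c) *\<^sub>R x + (s * c) *\<^sub>R t \<in> T" using that ct by (intro seg) auto
    moreover have "(1 - s * c) *\<^sub>R x + (s * c) *\<^sub>R t = x + s *\<^sub>R z" unfolding ct(3) by (simp add: algebra_simps)
    ultimately show ?thesis by simp
  qed
  then show ?thesis using ct by blast
qed

lemma E1: assumes "z \<in> tau" shows "eventually (\<lambda>s. x + s *\<^sub>R z \<in> T) (at_right 0)"
proof -
  obtain m where m: "m > 0" "\<And>s. 0 < s \<Longrightarrow> s * m \<le> 1 \<Longrightarrow> x + s *\<^sub>R z \<in> T" using tau_rep[OF assms] by blast
  show ?thesis
  proof (rule ev0[of "1/m"])
    fix s assume "0 < s" "s < 1/m"
    then show "x + s *\<^sub>R z \<in> T" using m by (intro m(2)) (auto simp: field_simps)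
  qed (use m in auto)
qed

end


context tc begin

lemma L2: assumes s: "s > 0" and u: "x + s *\<^sub>R z \<in> T" and z: "z \<in> tau"
  shows "funkM tau y z \<le> s * funkM T y (x + s *\<^sub>R z)"
proof -
  have "funkM tau y z / s \<le> funkM T y (x + s *\<^sub>R z)"
  proof (rule M_geI[OF T u])
    fix c assume c: "c \<in> Ms T y (x + s *\<^sub>R z)"
    then have "c *\<^sub>R (x + s *\<^sub>R z) - y \<in> closure tau" using clT_sub unfolding Ms_def by auto
    from lin[OF this, of "- c"] have "(c * s) *\<^sub>R z - y \<in> closure tau" by (simp add: algebra_simps)
    then have "c * s \<in> Ms tau y z" using c s unfolding Ms_def by auto
    from M_le[OF this] show "funkM tau y z / s \<le> c" using s by (simp add: divide_le_eq mult.commute)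
  qed
  then show ?thesis using s by (simp add: divide_le_eq mult.commute)
qed

lemma Ms_homog: assumes s: "s > 0" shows "c \<in> Ms tau (x + s *\<^sub>R w) z \<longleftrightarrow> c / s \<in> Ms tau w z"
proof -
  have "c *\<^sub>R z - (x + s *\<^sub>R w) \<in> closure tau \<longleftrightarrow> c *\<^sub>R z - s *\<^sub>R w \<in> closure tau"
  proof
    assume "c *\<^sub>R z - (x + s *\<^sub>R w) \<in> closure tau"
    from lin[OF this, of 1] show "c *\<^sub>R z - s *\<^sub>R w \<in> closure tau" by simp
  next
    assume "c *\<^sub>R z - s *\<^sub>R w \<in> closure tau"
    from lin[OF this, of "-1"] show "c *\<^sub>R z - (x + s *\<^sub>R w) \<in> closure tau" by (simp add: algebra_simps)
  qed
  also have "\<dots> \<longleftrightarrow> (c / s) *\<^sub>R z - w \<in> closure tau"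
  proof
    assume "c *\<^sub>R z - s *\<^sub>R w \<in> closure tau"
    from oc_cl_scale[OF tau_oc this, of "1/s"] s show "(c / s) *\<^sub>R z - w \<in> closure tau"
      by (simp add: scaleR_diff_right)
  next
    assume "(c / s) *\<^sub>R z - w \<in> closure tau"
    from oc_cl_scale[OF tau_oc this, of s] s show "c *\<^sub>R z - s *\<^sub>R w \<in> closure tau"
      by (simp add: scaleR_diff_right)
  qed
  finally show ?thesis unfolding Ms_def using s by (simp add: zero_less_divide_iff)
qed

lemma homog: assumes s: "s > 0" and z: "z \<in> tau"
  shows "funkM tau (x + s *\<^sub>R w) z = s * funkM tau w z"
proof (rule antisym)
  show "funkM tau (x + s *\<^sub>R w) z \<le> s * funkM tau w z"
  proof (rule M_leI[OF tau_oc z])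
    fix c assume "c > s * funkM tau w z"
    then have "c / s > funkM tau w z" using s by (simp add: field_simps)
    from M_lt[OF tau_oc z this] show "c \<in> Ms tau (x + s *\<^sub>R w) z" using Ms_homog[OF s] by simp
  qed
  show "s * funkM tau w z \<le> funkM tau (x + s *\<^sub>R w) z"
  proof (rule M_geI[OF tau_oc z])
    fix c assume "c \<in> Ms tau (x + s *\<^sub>R w) z"
    then have "c / s \<in> Ms tau w z" using Ms_homog[OF s] by simp
    from M_le[OF this] show "s * funkM tau w z \<le> c" using s by (simp add: field_simps)
  qed
qed

lemma L1: assumes y: "y \<in> T" and z: "z \<in> tau" and d: "d > 0"
  shows "eventually (\<lambda>s. funkM T y (x + s *\<^sub>R z) \<le> exp d * funkM tau y z / s) (at_right 0)"
proof -
  define m where "m = funkM tau y z"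
  have m: "m > 0" unfolding m_def using y T_sub by (intro M_pos_in[OF tau_oc z]) auto
  define c where "c = exp d * m"
  have cm: "c > m" using m d unfolding c_def by simp
  define c' where "c' = (m + c) / 2"
  have "c' \<in> Ms tau y z" using cm unfolding c'_def by (intro M_lt[OF tau_oc z]) (auto simp: m_def)
  then have c'1: "c' *\<^sub>R z - y \<in> closure tau" "c' < c" using cm unfolding Ms_def c'_def by auto
  have "(c - c') *\<^sub>R z + (c' *\<^sub>R z - y) \<in> tau"
    using c'1 z by (intro oc_add_cl[OF tau_oc] oc_scale[OF tau_oc]) auto
  then have "c *\<^sub>R z - y \<in> tau" by (simp add: algebra_simps)
  then obtain mu t where mt: "mu > 0" "t \<in> T" "c *\<^sub>R z - y = mu *\<^sub>R (t - x)" by (auto simp: tau_mem)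
  have c0: "c > 0" using cm m by simp
  have "eventually (\<lambda>s. 0 < s \<and> s < c / mu) (at_right 0)"
    by (rule ev0[of "c / mu"]) (use c0 mt in auto)
  then show ?thesis using E1[OF z]
  proof eventually_elim
    case (elim s)
    then have s: "0 < s" "s < c / mu" and u: "x + s *\<^sub>R z \<in> T" by auto
    define th where "th = s * mu / c"
    have th: "0 < th" "th \<le> 1" using s c0 mt unfolding th_def by (auto simp: field_simps)
    have "(c / s) *\<^sub>R ((1 - th) *\<^sub>R x + th *\<^sub>R t) \<in> T"
      using s c0 by (intro oc_scale[OF T] seg mt th) auto
    moreover have "(c / s) *\<^sub>R ((1 - th) *\<^sub>R x + th *\<^sub>R t) = (c / s) *\<^sub>R (x + s *\<^sub>R z) - y"
    proof -
      have "(c / s) *\<^sub>R (x + s *\<^sub>R z) - y = (c / s) *\<^sub>R x + (c *\<^sub>R z - y)" using s by (simp add: algebra_simps)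
      also have "\<dots> = (c / s) *\<^sub>R x + mu *\<^sub>R (t - x)" using mt by simp
      also have "\<dots> = (c / s) *\<^sub>R ((1 - th) *\<^sub>R x + th *\<^sub>R t)"
        using s c0 unfolding th_def by (simp add: algebra_simps scaleR_add_right)
      finally show ?thesis ..
    qed
    ultimately have "c / s \<in> Ms T y (x + s *\<^sub>R z)" using s c0 closure_subset unfolding Ms_def by auto
    from M_le[OF this] show ?case by (simp add: c_def m_def)
  qed
qed

lemma E5: assumes z: "z \<in> tau" and e: "e > 0"
  shows "eventually (\<lambda>s. funkM T x (x + s *\<^sub>R z) \<le> 1 + e) (at_right 0)"
proof -
  obtain c t where ct: "c > 0" "t \<in> T" "z = c *\<^sub>R (t - x)" using z by (auto simp: tau_mem)
  show ?thesis
  proof (rule ev0[of "e / (1 + e) / c"])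
    fix s assume s: "0 < s" "s < e / (1 + e) / c"
    define th where "th = s * c"
    have "s * c < e / (1 + e)" using s(2) ct(1) pos_less_divide_eq[of c s "e / (1 + e)"] by blast
    then have "s * c * (1 + e) < e" using e pos_less_divide_eq[of "1 + e" "s * c" e] by linarith
    moreover have "0 < s * c" using s(1) ct(1) by simp
    ultimately have th: "0 < th" "th * (1 + e) < e" unfolding th_def by auto
    have th1: "th < 1"
    proof (rule ccontr)
      assume "\<not> th < 1"
      then have "1 * (1 + e) \<le> th * (1 + e)" by (intro mult_right_mono) (use e in auto)
      then have "1 + e \<le> th * (1 + e)" by simp
      from le_less_trans[OF this th(2)] show False by simp
    qed
    have u: "x + s *\<^sub>R z = (1 - th) *\<^sub>R x + th *\<^sub>R t" unfolding ct(3) th_def by (simp add: algebra_simps)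
    have uT: "x + s *\<^sub>R z \<in> T" unfolding u using th th1 ct by (intro seg) auto
    have "funkM T x (x + s *\<^sub>R z) \<le> 1 / (1 - th)"
    proof (rule M_leI[OF T uT])
      fix a assume a: "a > 1 / (1 - th)"
      then have a1: "a * (1 - th) > 1" using th1 pos_divide_less_eq[of "1 - th" 1 a] by simp
      have "1 / (1 - th) > 0" using th1 by simp
      then have a0: "a > 0" using a by linarith
      have "(a * th) *\<^sub>R t + (a * (1 - th) - 1) *\<^sub>R x \<in> T"
        using a1 a0 th ct by (intro oc_add_cl[OF T] oc_scale[OF T] oc_cl_scale[OF T] xcl) auto
      moreover have "(a * th) *\<^sub>R t + (a * (1 - th) - 1) *\<^sub>R x = a *\<^sub>R (x + s *\<^sub>R z) - x"
        unfolding u by (simp add: algebra_simps)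
      ultimately show "a \<in> Ms T x (x + s *\<^sub>R z)" using a0 closure_subset unfolding Ms_def by auto
    qed
    also have "\<dots> \<le> 1 + e"
    proof -
      have "1 \<le> (1 + e) * (1 - th)" using th by (simp add: algebra_simps)
      then show ?thesis using th1 pos_divide_le_eq[of "1 - th" 1 "1 + e"] by simp
    qed
    finally show "funkM T x (x + s *\<^sub>R z) \<le> 1 + e" .
  qed (use e ct in auto)
qed

lemma E6: assumes u: "u \<in> T" and e: "e > 0"
  shows "eventually (\<lambda>s. \<bar>funkM T (x + s *\<^sub>R z) u - funkM T x u\<bar> \<le> e) (at_right 0)"
proof -
  obtain r where r: "r > 0" "\<And>y y'. \<bar>funkM T y' u - funkM T y u\<bar> \<le> norm (y' - y) / r"
    using M_lip[OF T u] by blast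
  show ?thesis
  proof (rule ev0[of "e * r / (norm z + 1)"])
    fix s assume s: "0 < s" "s < e * r / (norm z + 1)"
    have "s * norm z \<le> s * (norm z + 1)" using s by simp
    also have "\<dots> < e * r" using s(2) pos_less_divide_eq[of "norm z + 1" s "e * r"] by (simp add: add_nonneg_pos)
    finally have "norm (s *\<^sub>R z) / r \<le> e" using s r by (simp add: field_simps)
    then show "\<bar>funkM T (x + s *\<^sub>R z) u - funkM T x u\<bar> \<le> e" using r(2)[of x "x + s *\<^sub>R z"] by simp
  qed (use e r in \<open>auto simp: add_nonneg_pos\<close>)
qed

lemma Enorm: assumes e: "e > 0" shows "eventually (\<lambda>s. s * norm z \<le> e) (at_right 0)"
proof (rule ev0[of "e / (norm z + 1)"])
  fix s assume s: "0 < s" "s < e / (norm z + 1)"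
  have "s * norm z \<le> s * (norm z + 1)" using s by simp
  also have "\<dots> < e" using s(2) pos_less_divide_eq[of "norm z + 1" s "e"] by (simp add: add_nonneg_pos)
  finally show "s * norm z \<le> e" by simp
qed (use e in \<open>auto simp: add_nonneg_pos\<close>)

lemma Mx_pos: "u \<in> T \<Longrightarrow> funkM T x u > 0"
  by (rule M_pos[OF T _ xneg])

end


lemma dense_seq: assumes "open (T::'a::euclidean_space set)" "b \<in> T"
  shows "\<exists>d::nat \<Rightarrow> 'a. (\<forall>k. d k \<in> T) \<and> (\<forall>y\<in>T. \<forall>e>0. \<exists>k. dist (d k) y < e)"
proof -
  obtain D :: "'a set" where D: "countable D" "\<And>X. open X \<Longrightarrow> X \<noteq> {} \<Longrightarrow> \<exists>d\<in>D. d \<in> X"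
    by (rule countable_dense_setE) blast
  define d where "d k = (if from_nat_into D k \<in> T then from_nat_into D k else b)" for k
  have 1: "\<forall>k. d k \<in> T" using assms by (simp add: d_def)
  have 2: "\<forall>y\<in>T. \<forall>e>0. \<exists>k. dist (d k) y < e"
  proof (intro ballI allI impI)
    fix y and e :: real assume y: "y \<in> T" and e: "e > 0"
    have "open (ball y e \<inter> T)" using assms by auto
    moreover have "y \<in> ball y e \<inter> T" using y e by auto
    ultimately obtain p where p: "p \<in> D" "p \<in> ball y e \<inter> T" using D(2) by blast
    then obtain k where "from_nat_into D k = p" using from_nat_into_surj[OF D(1)] by blast
    then have "d k = p" using p by (simp add: d_def)
    then show "\<exists>k. dist (d k) y < e" using p by (auto simp: dist_commute)
  qed
  show ?thesis using 1 2 by blast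
qed

lemma close: assumes T: "open_cone T" and y: "y \<in> T" and dl: "dl > 0"
  shows "\<exists>e>0. \<forall>d. dist d y < e \<longrightarrow> exp dl *\<^sub>R d - y \<in> closure T \<and> exp dl *\<^sub>R y - d \<in> closure T"
proof -
  have "(exp dl - 1) *\<^sub>R y \<in> T" using dl by (intro oc_scale[OF T y]) auto
  then obtain r where r: "r > 0" "ball ((exp dl - 1) *\<^sub>R y) r \<subseteq> T" using oc_open[OF T] open_contains_ball by blast
  have ex: "exp dl > 0" by simp
  have ex1: "exp dl \<ge> 1" using dl by simp
  show ?thesis
  proof (intro exI[of _ "r / exp dl"] conjI allI impI)
    show "r / exp dl > 0" using r by simp
    fix d assume d: "dist d y < r / exp dl"
    then have nd: "norm (d - y) * exp dl < r" by (simp add: dist_norm pos_less_divide_eq)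
    have "dist ((exp dl - 1) *\<^sub>R y) (exp dl *\<^sub>R d - y) = norm (exp dl *\<^sub>R (d - y))"
      by (simp add: dist_norm algebra_simps norm_minus_commute)
    also have "\<dots> = norm (d - y) * exp dl" by simp
    finally have "exp dl *\<^sub>R d - y \<in> T" using nd r by auto
    then show "exp dl *\<^sub>R d - y \<in> closure T" using closure_subset by blast
    have "r / exp dl \<le> r" using r ex1 by (simp add: divide_le_eq)
    then have "dist ((exp dl - 1) *\<^sub>R y) (exp dl *\<^sub>R y - d) < r" using d
      by (simp add: dist_norm algebra_simps norm_minus_commute)
    then have "exp dl *\<^sub>R y - d \<in> T" using r by auto
    then show "exp dl *\<^sub>R y - d \<in> closure T" using closure_subset by blast
  qed
qed

lemma funk_cmp: assumes S: "open_cone S" and u: "u \<in> S" and w': "w' \<in> S" and w: "w \<in> S"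
  and le: "exp dl *\<^sub>R w' - w \<in> closure S"
  shows "funk S w u \<le> dl + funk S w' u"
proof -
  have "funkM S w u \<le> exp dl * funkM S w' u" by (rule M_mono[OF S u _ le]) simp
  then have "ln (funkM S w u) \<le> ln (exp dl * funkM S w' u)"
    using M_pos_in[OF S u w] M_pos_in[OF S u w'] by simp
  then show ?thesis unfolding funk_def using M_pos_in[OF S u w'] by (simp add: ln_mult)
qed

lemma tele: "(\<Sum>i=1..(l::nat). (a (i - 1) - a i)) = a 0 - (a l :: real)"
  by (induction l) auto

lemma geo: "(\<Sum>i=1..l. (1/2::real)^i) = 1 - (1/2)^l"
  by (induction l) auto



theorem mainTheorem16:
  fixes T :: "'a::euclidean_space set" and b x :: 'a and h :: "'a \<Rightarrow> real"
  assumes "open_cone T" and "b \<in> T"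
    and "x \<in> frontier T - zero_set T"
    and "in_K (tangent_cone T x) b h \<or> in_B (tangent_cone T x) b h"
  shows "\<exists>xs. (\<forall>n. xs n \<in> T) \<and>
           almost_geodesic T (funk T) xs \<and> almost_geodesic T (rfunk T) xs \<and>
           funk_converges T b xs h \<and> rfunk_converges T b xs (rfunk_r T b x)"
proof -
  interpret tc T x using assms(1,3) by unfold_locales auto
  have TT: "open_cone T" by (rule assms(1))
  have bT: "b \<in> T" by (rule assms(2))
  have "\<exists>z ez. (\<forall>n. z n \<in> tau) \<and> ez > 0 \<and>
     (\<forall>l\<ge>1. (\<Sum>i=1..l. funk tau (z (i - 1)) (z i)) \<le> funk tau (z 0) (z l) + ez) \<and>
     (\<forall>y\<in>tau. (\<lambda>n. funk tau y (z n) - funk tau b (z n)) \<longlonglongrightarrow> h y)"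
    using assms(4)
  proof
    assume "in_K tau b h"
    then obtain p where p: "p \<in> tau" "\<forall>y\<in>tau. h y = funk_f tau b p y" unfolding in_K_def by blast
    have "funk tau p p = 0" unfolding funk_def using M_self[OF tau_oc p(1)] by simp
    then show ?thesis using p
      by (intro exI[of _ "\<lambda>_. p"] exI[of _ "1::real"]) (auto simp: funk_f_def)
  next
    assume "in_B tau b h"
    then show ?thesis unfolding in_B_def almost_geodesic_def funk_converges_def by blast
  qed
  then obtain z ez where zt: "\<And>n. z n \<in> tau" and ez: "ez > 0"
    and zg: "\<And>l. l \<ge> 1 \<Longrightarrow> (\<Sum>i=1..l. funk tau (z (i - 1)) (z i)) \<le> funk tau (z 0) (z l) + ez"
    and zc: "\<And>y. y \<in> tau \<Longrightarrow> (\<lambda>n. funk tau y (z n) - funk tau b (z n)) \<longlonglongrightarrow> h y"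
    by blast
  obtain d :: "nat \<Rightarrow> 'a" where d: "(\<forall>k. d k \<in> T) \<and> (\<forall>y\<in>T. \<forall>e>0. \<exists>k. dist (d k) y < e)"
    using dense_seq[OF oc_open[OF TT] bT] ..
  have dT: "\<And>k. d k \<in> T" using conjunct1[OF d] by simp
  have dd: "\<And>y e. y \<in> T \<Longrightarrow> e > 0 \<Longrightarrow> \<exists>k. dist (d k) y < e" using conjunct2[OF d] by simp
  have nb: "at_right (0::real) \<noteq> bot" using trivial_limit_at_right_real unfolding trivial_limit_def by blast
  have "eventually (\<lambda>s. 0 < s \<and> x + s *\<^sub>R z 0 \<in> T \<and> funkM T x (x + s *\<^sub>R z 0) \<le> 1 + 1) (at_right 0)"
    using eventually_at_right_less[of "0::real"] E1[OF zt[of 0]] E5[OF zt[of 0] zero_less_one]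
    by eventually_elim auto
  from eventually_happens'[OF nb this] obtain s0 where s0: "0 < s0" "x + s0 *\<^sub>R z 0 \<in> T"
    "funkM T x (x + s0 *\<^sub>R z 0) \<le> 1 + 1" by blast
  define x0 where "x0 = x + s0 *\<^sub>R z 0"
  define m0 where "m0 = funkM T x x0"
  have x0T: "x0 \<in> T" using s0 by (simp add: x0_def)
  have m0: "m0 > 0" unfolding m0_def by (rule Mx_pos[OF x0T])
  define P where "P n s \<longleftrightarrow> s > 0 \<and> x + s *\<^sub>R z n \<in> T \<and> funkM T x (x + s *\<^sub>R z n) \<le> 1 + (1/2)^n \<and> (n = 0 \<longrightarrow> s = s0)"
    for n s
  define Q where "Q n s s' \<longleftrightarrow> s' * norm (z (Suc n)) \<le> 1 / real (Suc n) \<and>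
     (\<forall>y \<in> insert b (d ` {..Suc n}). funkM T y (x + s' *\<^sub>R z (Suc n)) \<le> exp (1 / real (Suc n)) * funkM tau y (z (Suc n)) / s') \<and>
     funkM T (x + s *\<^sub>R z n) (x + s' *\<^sub>R z (Suc n)) \<le> exp ((1/2)^Suc n) * funkM tau (x + s *\<^sub>R z n) (z (Suc n)) / s' \<and>
     funkM T (x + s' *\<^sub>R z (Suc n)) (x + s *\<^sub>R z n) \<le> funkM T x (x + s *\<^sub>R z n) + (1/2)^Suc n \<and>
     \<bar>funkM T (x + s' *\<^sub>R z (Suc n)) x0 - m0\<bar> \<le> m0 / 2" for n s s'
  have "\<exists>f. \<forall>n. P n (f n) \<and> Q n (f n) (f (Suc n))"
  proof (rule dependent_nat_choice)
    show "\<exists>s. P 0 s" using s0 by (intro exI[of _ s0]) (simp add: P_def)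
  next
    fix s n assume Pn: "P n s"
    then have uT: "x + s *\<^sub>R z n \<in> T" by (simp add: P_def)
    have fin: "finite (insert b (d ` {..Suc n}))" by simp
    have allT: "\<forall>y\<in>insert b (d ` {..Suc n}). y \<in> T" using bT dT by auto
    let ?F = "insert b (d ` {..Suc n})"
    let ?v = "\<lambda>s'. x + s' *\<^sub>R z (Suc n)"
    let ?u = "x + s *\<^sub>R z n"
    have e1: "eventually (\<lambda>s'. 0 < s') (at_right (0::real))" by (rule eventually_at_right_less)
    have e2: "eventually (\<lambda>s'. ?v s' \<in> T) (at_right 0)" by (rule E1[OF zt])
    have e3: "eventually (\<lambda>s'. funkM T x (?v s') \<le> 1 + (1/2)^Suc n) (at_right 0)" by (rule E5[OF zt]) simp
    have e4: "eventually (\<lambda>s'. s' * norm (z (Suc n)) \<le> 1 / real (Suc n)) (at_right 0)" by (rule Enorm) simp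
    have e5: "eventually (\<lambda>s'. \<forall>y\<in>?F. funkM T y (?v s') \<le> exp (1 / real (Suc n)) * funkM tau y (z (Suc n)) / s') (at_right 0)"
    proof (rule eventually_ball_finite[OF fin], rule ballI)
      fix y assume "y \<in> ?F"
      then have "y \<in> T" using allT by blast
      then show "eventually (\<lambda>s'. funkM T y (?v s') \<le> exp (1 / real (Suc n)) * funkM tau y (z (Suc n)) / s') (at_right 0)"
        by (rule L1[OF _ zt]) simp
    qed
    have e6: "eventually (\<lambda>s'. funkM T ?u (?v s') \<le> exp ((1/2)^Suc n) * funkM tau ?u (z (Suc n)) / s') (at_right 0)"
      by (rule L1[OF uT zt]) simp
    have e7: "eventually (\<lambda>s'. funkM T (?v s') ?u \<le> funkM T x ?u + (1/2)^Suc n) (at_right 0)"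
    proof -
      have "eventually (\<lambda>s'. \<bar>funkM T (?v s') ?u - funkM T x ?u\<bar> \<le> (1/2)^Suc n) (at_right 0)"
        by (rule E6[OF uT]) simp
      then show ?thesis by eventually_elim (drule abs_le_D1, linarith)
    qed
    have e8: "eventually (\<lambda>s'. \<bar>funkM T (?v s') x0 - m0\<bar> \<le> m0 / 2) (at_right 0)"
      using E6[OF x0T, of "m0 / 2" "z (Suc n)"] m0 unfolding m0_def by auto
    have "eventually (\<lambda>s'. P (Suc n) s' \<and> Q n s s') (at_right 0)"
      using e1 e2 e3 e4 e5 e6 e7 e8 unfolding P_def Q_def
      by eventually_elim auto
    from eventually_happens'[OF nb this] show "\<exists>s'. P (Suc n) s' \<and> Q n s s'" .
  qed
  then obtain s where sP: "\<And>n. P n (s n)" and sQ: "\<And>n. Q n (s n) (s (Suc n))" by blast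
  define xs where "xs n = x + s n *\<^sub>R z n" for n
  have spos: "s n > 0" for n using sP[of n] by (simp add: P_def)
  have xsT: "xs n \<in> T" for n using sP[of n] by (simp add: P_def xs_def)
  have s00: "s 0 = s0" using sP[of 0] by (simp add: P_def)
  have xs0: "xs 0 = x0" by (simp add: xs_def x0_def s00)
  have xsT': "x + s n *\<^sub>R z n \<in> T" for n using xsT[of n] by (simp add: xs_def)
  have q1: "s (Suc n) * norm (z (Suc n)) \<le> 1 / real (Suc n)" for n using sQ[of n] by (simp add: Q_def)
  have q2: "funkM T y (xs (Suc n)) \<le> exp (1 / real (Suc n)) * funkM tau y (z (Suc n)) / s (Suc n)"
    if "y \<in> insert b (d ` {..Suc n})" for n y using sQ[of n] that unfolding Q_def xs_def by blast
  have q3: "funkM T (xs n) (xs (Suc n)) \<le> exp ((1/2)^Suc n) * funkM tau (xs n) (z (Suc n)) / s (Suc n)" for n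
    using sQ[of n] unfolding Q_def xs_def by blast
  have q4: "funkM T (xs (Suc n)) (xs n) \<le> funkM T x (xs n) + (1/2)^Suc n" for n
    using sQ[of n] unfolding Q_def xs_def by blast
  have q5: "\<bar>funkM T (xs (Suc n)) x0 - m0\<bar> \<le> m0 / 2" for n
    using sQ[of n] unfolding Q_def xs_def by blast
  have p3: "funkM T x (xs n) \<le> 1 + (1/2)^n" for n using sP[of n] unfolding P_def xs_def by blast
  have zT: "\<And>y. y \<in> T \<Longrightarrow> y \<in> tau" using T_sub by blast

  have F1: "funk T (xs n) (xs (Suc n)) \<le> funk tau (z n) (z (Suc n)) + (ln (s n) - ln (s (Suc n))) + (1/2)^Suc n" for n
  proof -
    define A where "A = funkM tau (z n) (z (Suc n))"
    have A: "A > 0" unfolding A_def by (rule M_pos_in[OF tau_oc zt zt])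
    have h: "funkM tau (xs n) (z (Suc n)) = s n * A" unfolding xs_def A_def by (rule homog[OF spos zt])
    have M0: "funkM T (xs n) (xs (Suc n)) > 0" by (rule M_pos_in[OF TT xsT xsT])
    have "funkM T (xs n) (xs (Suc n)) \<le> exp ((1/2)^Suc n) * (s n * A) / s (Suc n)" using q3[of n] h by simp
    then have "ln (funkM T (xs n) (xs (Suc n))) \<le> ln (exp ((1/2)^Suc n) * (s n * A) / s (Suc n))"
      using M0 by (rule ln_mono)
    also have "\<dots> = (1/2)^Suc n + (ln (s n) + ln A) - ln (s (Suc n))"
      using spos[of n] spos[of "Suc n"] A by (simp add: ln_mult ln_div)
    finally show ?thesis unfolding funk_def A_def by simp
  qed

  have F2: "funk tau (z 0) (z l) + ln s0 - ln (s l) \<le> funk T x0 (xs l)" for l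
  proof -
    define B where "B = funkM tau (z 0) (z l)"
    have B: "B > 0" unfolding B_def by (rule M_pos_in[OF tau_oc zt zt])
    have h: "funkM tau x0 (z l) = s0 * B" unfolding x0_def B_def by (rule homog[OF s0(1) zt])
    have M0: "funkM T x0 (xs l) > 0" by (rule M_pos_in[OF TT xsT x0T])
    have "funkM tau x0 (z l) \<le> s l * funkM T x0 (x + s l *\<^sub>R z l)" by (rule L2[OF spos xsT' zt])
    then have "s0 * B \<le> s l * funkM T x0 (xs l)" using h by (simp add: xs_def)
    then have "ln (s0 * B) \<le> ln (s l * funkM T x0 (xs l))" using s0(1) B by (intro ln_mono) auto
    then have "ln s0 + ln B \<le> ln (s l) + ln (funkM T x0 (xs l))" using s0(1) B spos[of l] M0 by (simp add: ln_mult)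
    then show ?thesis unfolding funk_def B_def by simp
  qed

  have F3: "funk T (xs (Suc n)) (xs n) \<le> 3 * (1/2)^Suc n" for n
  proof -
    have M0: "funkM T (xs (Suc n)) (xs n) > 0" by (rule M_pos_in[OF TT xsT xsT])
    have "ln (funkM T (xs (Suc n)) (xs n)) \<le> funkM T (xs (Suc n)) (xs n) - 1" by (rule ln_le_minus_one[OF M0])
    also have "\<dots> \<le> (1/2)^n + (1/2)^Suc n" using q4[of n] p3[of n] by simp
    also have "\<dots> = 3 * (1/2)^Suc n" by simp
    finally show ?thesis unfolding funk_def .
  qed

  have F4: "ln (m0 / 2) \<le> funk T (xs (Suc n)) x0" for n
  proof -
    have "m0 / 2 \<le> funkM T (xs (Suc n)) x0" using q5[of n] by (simp only: abs_le_iff) linarith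
    then show ?thesis unfolding funk_def using m0 by (intro ln_mono) auto
  qed

  have F5a: "funk tau y (z n) - ln (s n) \<le> funk T y (xs n)" if y: "y \<in> T" for n y
  proof -
    have M0: "funkM T y (xs n) > 0" by (rule M_pos_in[OF TT xsT y])
    have Mt: "funkM tau y (z n) > 0" by (rule M_pos_in[OF tau_oc zt zT[OF y]])
    have "funkM tau y (z n) \<le> s n * funkM T y (x + s n *\<^sub>R z n)" by (rule L2[OF spos xsT' zt])
    then have "ln (funkM tau y (z n)) \<le> ln (s n * funkM T y (xs n))" using Mt by (intro ln_mono) (auto simp: xs_def)
    then show ?thesis unfolding funk_def using spos[of n] M0 by (simp add: ln_mult)
  qed

  have F5b: "funk T y (xs (Suc n)) \<le> funk tau y (z (Suc n)) - ln (s (Suc n)) + 1 / real (Suc n)"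
    if y: "y \<in> insert b (d ` {..Suc n})" for n y
  proof -
    have yT: "y \<in> T" using y bT dT by auto
    have M0: "funkM T y (xs (Suc n)) > 0" by (rule M_pos_in[OF TT xsT yT])
    have Mt: "funkM tau y (z (Suc n)) > 0" by (rule M_pos_in[OF tau_oc zt zT[OF yT]])
    have "ln (funkM T y (xs (Suc n))) \<le> ln (exp (1 / real (Suc n)) * funkM tau y (z (Suc n)) / s (Suc n))"
      using q2[OF y] M0 by (rule ln_mono)
    also have "\<dots> = 1 / real (Suc n) + ln (funkM tau y (z (Suc n))) - ln (s (Suc n))"
      using Mt spos[of "Suc n"] by (simp add: ln_mult ln_div)
    finally show ?thesis unfolding funk_def by simp
  qed

  have F6: "norm (xs (Suc n) - x) \<le> 1 / real (Suc n)" for n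
    using q1[of n] spos[of "Suc n"] by (simp add: xs_def)

  have AG1: "almost_geodesic T (funk T) xs"
  proof -
    have "\<forall>l\<ge>1. (\<Sum>i=1..l. funk T (xs (i - 1)) (xs i)) \<le> funk T (xs 0) (xs l) + (ez + 1)"
    proof (intro allI impI)
      fix l :: nat assume l: "l \<ge> 1"
      have "(\<Sum>i=1..l. funk T (xs (i - 1)) (xs i)) \<le>
            (\<Sum>i=1..l. funk tau (z (i - 1)) (z i) + (ln (s (i - 1)) - ln (s i)) + (1/2)^i)"
      proof (rule sum_mono)
        fix i assume "i \<in> {1..l}"
        then obtain n where "i = Suc n" by (cases i) auto
        then show "funk T (xs (i - 1)) (xs i) \<le> funk tau (z (i - 1)) (z i) + (ln (s (i - 1)) - ln (s i)) + (1/2)^i"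
          using F1[of n] by simp
      qed
      also have "\<dots> = (\<Sum>i=1..l. funk tau (z (i - 1)) (z i)) + (\<Sum>i=1..l. (ln (s (i - 1)) - ln (s i))) + (\<Sum>i=1..l. (1/2::real)^i)"
        by (simp add: sum.distrib)
      also have "\<dots> = (\<Sum>i=1..l. funk tau (z (i - 1)) (z i)) + (ln (s 0) - ln (s l)) + (1 - (1/2)^l)"
        using tele[of "\<lambda>i. ln (s i)" l] geo[of l] by simp
      also have "\<dots> \<le> funk tau (z 0) (z l) + ez + (ln s0 - ln (s l)) + 1"
      proof -
        have "(0::real) \<le> (1/2)^l" by simp
        then show ?thesis unfolding s00 using zg[OF l] by linarith
      qed
      also have "\<dots> \<le> funk T (xs 0) (xs l) + (ez + 1)" using F2[of l] xs0 by simp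
      finally show "(\<Sum>i=1..l. funk T (xs (i - 1)) (xs i)) \<le> funk T (xs 0) (xs l) + (ez + 1)" .
    qed
    then show ?thesis unfolding almost_geodesic_def using xsT ez by (intro conjI allI exI[of _ "ez + 1"]) auto
  qed

  have AG2: "almost_geodesic T (rfunk T) xs"
  proof -
    define E where "E = 3 + \<bar>ln (m0 / 2)\<bar>"
    have "\<forall>l\<ge>1. (\<Sum>i=1..l. rfunk T (xs (i - 1)) (xs i)) \<le> rfunk T (xs 0) (xs l) + E"
    proof (intro allI impI)
      fix l :: nat assume l: "l \<ge> 1"
      have "(\<Sum>i=1..l. rfunk T (xs (i - 1)) (xs i)) \<le> (\<Sum>i=1..l. 3 * (1/2::real)^i)"
      proof (rule sum_mono)
        fix i assume "i \<in> {1..l}"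
        then obtain n where "i = Suc n" by (cases i) auto
        then show "rfunk T (xs (i - 1)) (xs i) \<le> 3 * (1/2)^i"
          using F3[of n] by (simp add: rfunk_def)
      qed
      also have "\<dots> = 3 * (1 - (1/2)^l)" unfolding sum_distrib_left[symmetric] geo[of l] ..
      also have "\<dots> \<le> 3" by simp
      also have "\<dots> \<le> rfunk T (xs 0) (xs l) + E"
      proof -
        obtain n where "l = Suc n" using l by (cases l) auto
        then have "ln (m0 / 2) \<le> rfunk T (xs 0) (xs l)" using F4[of n] xs0 by (simp add: rfunk_def)
        then show ?thesis unfolding E_def by linarith
      qed
      finally show "(\<Sum>i=1..l. rfunk T (xs (i - 1)) (xs i)) \<le> rfunk T (xs 0) (xs l) + E" .
    qed
    moreover have "E > 0" unfolding E_def by simp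
    ultimately show ?thesis unfolding almost_geodesic_def using xsT by (intro conjI allI exI[of _ E]) auto
  qed

  define G where "G w n = funk T w (xs n) - funk T b (xs n)" for w n
  define K where "K w n = funk tau w (z n) - funk tau b (z n)" for w n
  have hK: "K w \<longlonglongrightarrow> h w" if "w \<in> T" for w unfolding K_def[abs_def] using zc zT[OF that] by simp
  have hGK: "\<bar>G (d k) n - K (d k) n\<bar> \<le> 1 / real n" if kn: "k \<le> n" "1 \<le> n" for k n
  proof -
    obtain m where m: "n = Suc m" using kn by (cases n) auto
    have "d k \<in> insert b (d ` {..Suc m})" using kn m by auto
    from F5b[OF this] F5a[OF dT[of k], of "Suc m"] 
    have 1: "funk T (d k) (xs n) \<le> funk tau (d k) (z n) - ln (s n) + 1 / real n"
      "funk tau (d k) (z n) - ln (s n) \<le> funk T (d k) (xs n)" using m by auto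
    have "b \<in> insert b (d ` {..Suc m})" by simp
    from F5b[OF this] F5a[OF bT, of "Suc m"]
    have 2: "funk T b (xs n) \<le> funk tau b (z n) - ln (s n) + 1 / real n"
      "funk tau b (z n) - ln (s n) \<le> funk T b (xs n)" using m by auto
    show ?thesis unfolding G_def K_def using 1 2 by (simp only: abs_le_iff) linarith
  qed
  have hEq: "\<bar>G w n - G w' n\<bar> \<le> dl \<and> \<bar>K w n - K w' n\<bar> \<le> dl"
    if w: "w \<in> T" "w' \<in> T" "exp dl *\<^sub>R w' - w \<in> closure T" "exp dl *\<^sub>R w - w' \<in> closure T" for w w' dl n
  proof -
    have 1: "funk T w (xs n) \<le> dl + funk T w' (xs n)" by (rule funk_cmp[OF TT xsT w(2) w(1) w(3)])
    have 2: "funk T w' (xs n) \<le> dl + funk T w (xs n)" by (rule funk_cmp[OF TT xsT w(1) w(2) w(4)])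
    have 3: "funk tau w (z n) \<le> dl + funk tau w' (z n)"
      by (rule funk_cmp[OF tau_oc zt zT[OF w(2)] zT[OF w(1)]]) (use w(3) clT_sub in blast)
    have 4: "funk tau w' (z n) \<le> dl + funk tau w (z n)"
      by (rule funk_cmp[OF tau_oc zt zT[OF w(1)] zT[OF w(2)]]) (use w(4) clT_sub in blast)
    show ?thesis unfolding G_def K_def using 1 2 3 4 by (simp only: abs_le_iff) linarith
  qed

  have FC: "funk_converges T b xs h"
    unfolding funk_converges_def
  proof (intro conjI allI ballI)
    show "xs n \<in> T" for n by (rule xsT)
    fix y assume y: "y \<in> T"
    show "(\<lambda>n. funk T y (xs n) - funk T b (xs n)) \<longlonglongrightarrow> h y"
    proof (rule LIMSEQ_I)
      fix r :: real assume r: "r > 0"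
      define dl where "dl = r / 4"
      have dl: "dl > 0" using r by (simp add: dl_def)
      obtain e where e: "e > 0" "\<And>p. dist p y < e \<Longrightarrow> exp dl *\<^sub>R p - y \<in> closure T \<and> exp dl *\<^sub>R y - p \<in> closure T"
        using close[OF TT y dl] by blast
      obtain k where k: "dist (d k) y < e" using dd[OF y e(1)] by blast
      have cl: "exp dl *\<^sub>R d k - y \<in> closure T" "exp dl *\<^sub>R y - d k \<in> closure T" using e(2)[OF k] by auto
      have eq: "\<bar>G y n - G (d k) n\<bar> \<le> dl \<and> \<bar>K y n - K (d k) n\<bar> \<le> dl" for n
        by (rule hEq[OF y dT cl])
      have hh: "\<bar>h y - h (d k)\<bar> \<le> dl"
      proof -
        have "(\<lambda>n. \<bar>K y n - K (d k) n\<bar>) \<longlonglongrightarrow> \<bar>h y - h (d k)\<bar>"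
          by (intro tendsto_intros hK y dT)
        then show ?thesis by (rule LIMSEQ_le_const2) (use eq in blast)
      qed
      obtain N1 where N1: "\<And>n. n \<ge> N1 \<Longrightarrow> norm (K (d k) n - h (d k)) < r / 4"
        using LIMSEQ_D[OF hK[OF dT] , of "r / 4"] r by auto
      obtain N2 :: nat where N2: "N2 > 0" "inverse (real N2) < r / 4"
        using ex_inverse_of_nat_less[of "r / 4"] r by auto
      show "\<exists>no. \<forall>n\<ge>no. norm (funk T y (xs n) - funk T b (xs n) - h y) < r"
      proof (intro exI allI impI)
        fix n assume n: "n \<ge> max k (max N1 N2)"
        then have n1: "1 \<le> n" using N2 by auto
        have "1 / real n \<le> inverse (real N2)" using n N2 by (simp add: divide_simps)
        then have a: "\<bar>G (d k) n - K (d k) n\<bar> < r / 4" using hGK[of k n] n n1 N2 by auto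
        have b: "\<bar>K (d k) n - h (d k)\<bar> < r / 4" using N1[of n] n by auto
        have "\<bar>G y n - h y\<bar> < r" using a b eq[of n] hh unfolding dl_def by (simp only: abs_le_iff abs_less_iff) linarith
        then show "norm (funk T y (xs n) - funk T b (xs n) - h y) < r" by (simp add: G_def)
      qed
    qed
  qed

  have xconv: "(\<lambda>n. funkM T (xs n) w) \<longlonglongrightarrow> funkM T x w" if w: "w \<in> T" for w
  proof -
    obtain r where r: "r > 0" "\<And>y y'. \<bar>funkM T y' w - funkM T y w\<bar> \<le> norm (y' - y) / r"
      using M_lip[OF TT w] by blast
    have "(\<lambda>n. funkM T (xs n) w - funkM T x w) \<longlonglongrightarrow> 0"
    proof (rule Lim_null_comparison)
      show "eventually (\<lambda>n. norm (funkM T (xs n) w - funkM T x w) \<le> (1 / real n) / r) sequentially"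
        unfolding eventually_sequentially
      proof (intro exI allI impI)
        fix n :: nat assume "n \<ge> 1"
        then obtain m where m: "n = Suc m" by (cases n) auto
        have "norm (funkM T (xs n) w - funkM T x w) \<le> norm (xs n - x) / r" using r(2) by simp
        also have "\<dots> \<le> (1 / real n) / r" using divide_right_mono[OF F6[of m] less_imp_le[OF r(1)]] m by simp
        finally show "norm (funkM T (xs n) w - funkM T x w) \<le> (1 / real n) / r" .
      qed
      show "(\<lambda>n. (1 / real n) / r) \<longlonglongrightarrow> 0"
        using tendsto_divide[OF lim_inverse_n' tendsto_const[of r]] r by simp
    qed
    then show ?thesis by (rule LIM_zero_cancel)
  qed

  have RC: "rfunk_converges T b xs (rfunk_r T b x)"
    unfolding rfunk_converges_def
  proof (intro conjI allI ballI)
    show "xs n \<in> T" for n by (rule xsT)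
    fix y assume y: "y \<in> T"
    have "(\<lambda>n. ln (funkM T (xs n) y) - ln (funkM T (xs n) b)) \<longlonglongrightarrow> ln (funkM T x y) - ln (funkM T x b)"
      using xconv[OF y] xconv[OF bT] Mx_pos[OF y] Mx_pos[OF bT]
      by (intro tendsto_intros) auto
    then show "(\<lambda>n. rfunk T y (xs n) - rfunk T b (xs n)) \<longlonglongrightarrow> rfunk_r T b x y"
      by (simp add: rfunk_def rfunk_r_def funk_def)
  qed

  show ?thesis using xsT AG1 AG2 FC RC by blast
qed


end
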